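(* Let $N\ge1$, $\Omega=[1,N+1]$, and for $j=1,\ldots,N$ let $B_{1,j}(x)=1$ if $j\le x<j+1$ and $B_{1,j}(x)=0$ otherwise. Let $s=1$. If the distinct points $\{x_1,\ldots,x_m\}\subset\Omega$ are unisolvent for the $s$-sparse interpolation with the basis $\{B_{1,1},\ldots,B_{1,N}\}$ and the domain $\Omega$, then $m\ge N$.
   Context: Let $\mathbf U^s:=\{\sum_{j\in T}c_jB_{1,j}: T\subset\{1,\ldots,N\},\ \#T\le s,\ c_j\in\mathbb{C}\}$. A set of $m$ distinct points $\{x_1,\ldots,x_m\}\subset\Omega$ is unisolvent if whenever $f,g\in\mathbf U^s$ satisfy $f(x_j)=g(x_j)$ for $j=1,\ldots,m$, then $f\equiv g$. *)

theory Defs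
  imports Complex_Main
begin

definition Bspline1 :: "nat \<Rightarrow> real \<Rightarrow> complex" where
  "Bspline1 j x = (if real j \<le> x \<and> x < real j + 1 then 1 else 0)"

definition Omega :: "nat \<Rightarrow> real set" where
  "Omega N = {1 .. real N + 1}"

definition sparse_space :: "nat \<Rightarrow> nat \<Rightarrow> (real \<Rightarrow> complex) set" where
  "sparse_space N s = {f. \<exists>T c. T \<subseteq> {1..N} \<and> card T \<le> s \<and>
      f = (\<lambda>x. \<Sum>j\<in>T. c j * Bspline1 j x)}"

definition unisolvent :: "nat \<Rightarrow> nat \<Rightarrow> nat \<Rightarrow> (nat \<Rightarrow> real) \<Rightarrow> bool" where
  "unisolvent N s m x \<longleftrightarrow>
     (\<forall>f\<in>sparse_space N s. \<forall>g\<in>sparse_space N s.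
        (\<forall>i\<in>{1..m}. f (x i) = g (x i)) \<longrightarrow> (\<forall>y\<in>Omega N. f y = g y))"

end

theory Submission
  imports Defs
begin

theorem proposition1:
  fixes N m :: nat and x :: "nat \<Rightarrow> real"
  assumes "N \<ge> 1"
    and "inj_on x {1..m}"
    and "x ` {1..m} \<subseteq> Omega N"
    and "unisolvent N 1 m x"
  shows "m \<ge> N"
proof (rule ccontr)
  assume "\<not> m \<ge> N"
  hence mN: "m < N" by simp
  define J where "J = {j \<in> {1..N}. \<exists>i\<in>{1..m}. real j \<le> x i \<and> x i < real j + 1}"
  have "J \<subseteq> (\<lambda>i. nat \<lfloor>x i\<rfloor>) ` {1..m}"
  proof
    fix j assume "j \<in> J"
    then obtain i where i: "i \<in> {1..m}" "real j \<le> x i" "x i < real j + 1" unfolding J_def by auto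
    hence "\<lfloor>x i\<rfloor> = int j" by (simp add: floor_eq_iff)
    thus "j \<in> (\<lambda>i. nat \<lfloor>x i\<rfloor>) ` {1..m}" using i by force
  qed
  hence "card J \<le> card ((\<lambda>i. nat \<lfloor>x i\<rfloor>) ` {1..m})" by (intro card_mono) auto
  also have "\<dots> \<le> card {1..m}" by (rule card_image_le) simp
  finally have "card J \<le> m" by simp
  hence "card J < card {1..N}" using mN by simp
  moreover have "J \<subseteq> {1..N}" unfolding J_def by auto
  ultimately have "\<not> {1..N} \<subseteq> J" using subset_antisym by fastforce
  then obtain j where j: "j \<in> {1..N}" "j \<notin> J" by blast
  define f where "f = (\<lambda>y. \<Sum>k\<in>{j}. (\<lambda>_. 1::complex) k * Bspline1 k y)"
  define g where "g = (\<lambda>y. \<Sum>k\<in>{j}. (\<lambda>_. 0::complex) k * Bspline1 k y)"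
  have fS: "f \<in> sparse_space N 1" unfolding sparse_space_def mem_Collect_eq f_def
    by (rule exI[of _ "{j}"], rule exI[of _ "\<lambda>_. 1::complex"]) (use j(1) in simp)
  have gS: "g \<in> sparse_space N 1" unfolding sparse_space_def mem_Collect_eq g_def
    by (rule exI[of _ "{j}"], rule exI[of _ "\<lambda>_. 0::complex"]) (use j(1) in simp)
  have "\<forall>i\<in>{1..m}. f (x i) = g (x i)"
  proof
    fix i assume i: "i \<in> {1..m}"
    have "\<not> (real j \<le> x i \<and> x i < real j + 1)" using j i unfolding J_def by blast
    thus "f (x i) = g (x i)" unfolding f_def g_def Bspline1_def by simp
  qed
  hence "\<forall>y\<in>Omega N. f y = g y" using assms(4) fS gS unfolding unisolvent_def by (meson)
  moreover have "real j \<in> Omega N" using j(1) unfolding Omega_def by auto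
  ultimately have "f (real j) = g (real j)" by blast
  thus False unfolding f_def g_def Bspline1_def by simp
qed

end
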